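(* Let $g$ be a nondegenerate symmetric bilinear form on $\mathbb{R}^n$ with $n_-(g)=1$, $R:[0,1]\to\mathcal L(\mathbb{R}^n)$ a continuous map of $g$-symmetric operators, $P\subset\mathbb{R}^n$ a subspace on which $g$ is nondegenerate, and $Y:[0,1]\to\mathbb{R}^n$ a solution of $Y''=RY$ with $g(Y,Y)<0$ on $[0,1]$. Let $\hat{\mathcal K}_0=\{\hat V\in H^1_P([0,1],\mathbb{R}^n): g(\hat V'(u),Y(0))\text{ is constant a.e.}\}$ and $C_0(\hat V,\hat W)=\int_0^1g(\hat V'(u),\hat W'(u))\,du$. Then $$n_-(C_0|_{\hat{\mathcal K}_0})=n_-(g|_P).$$
   Context: $g$-symmetric: $g(Tx,y)=g(x,Ty)$. $H^1_P([0,1],\mathbb{R}^n)=\{V\in H^1([0,1],\mathbb{R}^n):V(0)\in P,\ V(1)=0\}$. For a symmetric bilinear form $B$, $n_-(B)$ is the supremum of dimensions of subspaces on which $B$ is negative definite. *)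

theory Defs
  imports "HOL-Analysis.Analysis" "HOL-Library.Function_Algebras"
begin

definition neg_index :: "(real \<Rightarrow> 'a \<Rightarrow> 'a) \<Rightarrow> ('a::ab_group_add \<Rightarrow> 'a \<Rightarrow> real) \<Rightarrow> 'a set \<Rightarrow> enat" where
  "neg_index scl B S = Sup {enat (vector_space.dim scl W) | W.
      module.subspace scl W \<and> W \<subseteq> S \<and> (\<forall>w\<in>W. w \<noteq> 0 \<longrightarrow> B w w < 0)}"

definition fscale :: "real \<Rightarrow> (real \<Rightarrow> real^'n) \<Rightarrow> (real \<Rightarrow> real^'n)" where
  "fscale c V = (\<lambda>u. c *\<^sub>R V u)"

definition is_h1_deriv :: "(real \<Rightarrow> real^'n) \<Rightarrow> (real \<Rightarrow> real^'n) \<Rightarrow> bool" where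
  "is_h1_deriv V V' \<longleftrightarrow> V' integrable_on {0..1} \<and> (\<lambda>u. (norm (V' u))\<^sup>2) integrable_on {0..1}
     \<and> (\<forall>t\<in>{0..1}. V t = V 0 + integral {0..t} V')"

text \<open>H^1([0,1],R^n); curves are represented as functions on the reals vanishing outside [0,1].\<close>
definition H1 :: "(real \<Rightarrow> real^'n) set" where
  "H1 = {V. (\<exists>V'. is_h1_deriv V V') \<and> (\<forall>t. t \<notin> {0..1} \<longrightarrow> V t = 0)}"

definition h1_deriv :: "(real \<Rightarrow> real^'n) \<Rightarrow> (real \<Rightarrow> real^'n)" where
  "h1_deriv V = (SOME V'. is_h1_deriv V V')"

definition H1_P :: "(real^'n) set \<Rightarrow> (real \<Rightarrow> real^'n) set" where
  "H1_P P = {V \<in> H1. V 0 \<in> P \<and> V 1 = 0}"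

definition hatK0 :: "(real^'n \<Rightarrow> real^'n \<Rightarrow> real) \<Rightarrow> (real^'n) set \<Rightarrow> real^'n \<Rightarrow> (real \<Rightarrow> real^'n) set" where
  "hatK0 g P y0 = {V \<in> H1_P P. \<exists>c. AE u in lebesgue. u \<in> {0..1} \<longrightarrow> g (h1_deriv V u) y0 = c}"

definition C0 :: "(real^'n \<Rightarrow> real^'n \<Rightarrow> real) \<Rightarrow> (real \<Rightarrow> real^'n) \<Rightarrow> (real \<Rightarrow> real^'n) \<Rightarrow> real" where
  "C0 g V W = integral {0..1} (\<lambda>u. g (h1_deriv V u) (h1_deriv W u))"

end

theory Submission
  imports Defs
begin


lemma vs_fscale: "vector_space (fscale :: real \<Rightarrow> (real \<Rightarrow> real^'n) \<Rightarrow> _)"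
  by unfold_locales (auto simp: fscale_def fun_eq_iff scaleR_add_right scaleR_add_left)

lemma dim_inj_image:
  assumes lin: "Vector_Spaces.linear s1 s2 f" and sub: "module.subspace s1 W" and inj: "inj_on f W"
  shows "vector_space.dim s2 (f ` W) = vector_space.dim s1 W"
proof -
  interpret Vector_Spaces.linear s1 s2 f by (rule lin)
  obtain B where B: "B \<subseteq> W" "vs1.independent B" "W \<subseteq> vs1.span B" "card B = vs1.dim W"
    using vs1.basis_exists by blast
  have spB: "vs1.span B = W"
    using B sub vs1.span_minimal by blast
  have inj2: "inj_on f (vs1.span B)" using spB inj by simp
  have ind: "vs2.independent (f ` B)"
    using independent_injective_image[OF B(2) inj2] .
  have "vs2.dim (f ` W) = vs2.dim (vs2.span (f ` B))"
    using span_image spB by simp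
  also have "\<dots> = card (f ` B)" using vs2.dim_span_eq_card_independent[OF ind] .
  also have "\<dots> = card B" using card_image inj B(1) inj_on_subset by blast
  finally show ?thesis using B(4) by simp
qed



lemma zero_deriv_ae:
  fixes f :: "real \<Rightarrow> real^'n"
  assumes fi: "f integrable_on {0..1}" and z: "\<And>t. t\<in>{0..1} \<Longrightarrow> integral {0..t} f = 0"
  shows "\<exists>N. negligible N \<and> (\<forall>u\<in>{0..1} - N. f u = 0)"
proof -
  define F where "F = (\<lambda>x. if x \<in> {0..1} then f x else 0)"
  have FU: "F integrable_on UNIV" unfolding F_def using integrable_restrict_UNIV fi by blast
  have "\<And>a b. F integrable_on cbox a b" using integrable_on_subcbox[OF FU] by blast
  then obtain N where N: "negligible N"
    and lim: "\<And>x e. \<lbrakk>x \<notin> N; 0 < e\<rbrakk> \<Longrightarrow> \<exists>d>0. \<forall>h. 0 < h \<and> h < d \<longrightarrow>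
        norm (integral (cbox x (x + h *\<^sub>R One)) F /\<^sub>R h ^ DIM(real) - F x) < e"
    by (rule integrable_ccontinuous_explicit) blast
  have "\<forall>u\<in>{0..1} - (N \<union> {1}). f u = 0"
  proof
    fix u assume u: "u \<in> {0..1} - (N \<union> {1})"
    hence u0: "0 \<le> u" "u < 1" "u \<notin> N" by auto
    have "norm (f u) < e" if e: "e > 0" for e
    proof -
      obtain d where d: "d > 0" and dh: "\<And>h. 0 < h \<and> h < d \<Longrightarrow>
          norm (integral (cbox u (u + h *\<^sub>R One)) F /\<^sub>R h ^ DIM(real) - F u) < e"
        using lim[OF u0(3) e] by blast
      define h where "h = min (d/2) ((1-u)/2)"
      have h: "0 < h" "h < d" "u + h \<le> 1" using d u0 unfolding h_def by (auto simp: min_def field_simps)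
      have cb: "cbox u (u + h *\<^sub>R One) = {u..u+h}" by auto
      have "integral {u..u+h} F = integral {u..u+h} f"
        by (rule integral_cong) (use u0 h in \<open>auto simp: F_def\<close>)
      also have "\<dots> = 0"
      proof -
        have fi2: "f integrable_on {0..u+h}" using integrable_on_subinterval[OF fi] h u0 by auto
        have "integral {0..u} f + integral {u..u+h} f = integral {0..u+h} f"
          using Henstock_Kurzweil_Integration.integral_combine[OF u0(1) _ fi2] h by simp
        thus ?thesis using z[of u] z[of "u+h"] u0 h by simp
      qed
      finally have "norm (0 - F u) < e" using dh[of h] h cb by simp
      thus ?thesis using u0 by (simp add: F_def)
    qed
    then show "f u = 0"
      by (metis less_irrefl zero_less_norm_iff)
  qed
  moreover have "negligible (N \<union> {1})" using N by simp
  ultimately show ?thesis by blast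
qed



lemma spacelike:
  fixes g :: "real^'n \<Rightarrow> real^'n \<Rightarrow> real"
  assumes g_bil: "bilinear g" and g_sym: "\<And>x y. g x y = g y x"
    and g_index: "neg_index scaleR g UNIV = 1"
    and y: "g y y < 0" and zy: "g z y = 0"
  shows "g z z \<ge> 0"
proof (rule ccontr)
  assume "\<not> g z z \<ge> 0"
  hence z: "g z z < 0" by simp
  have y0: "y \<noteq> 0" using y g_bil by (auto simp: bilinear_lzero)
  have yz: "y \<noteq> z" using y zy by auto
  have gl: "g (a *\<^sub>R y + b *\<^sub>R z) (a *\<^sub>R y + b *\<^sub>R z) = a*a * g y y + b*b * g z z" for a b
  proof -
    have "g (a *\<^sub>R y + b *\<^sub>R z) (a *\<^sub>R y + b *\<^sub>R z)
       = a*a * g y y + a*b * g y z + b*a * g z y + b*b * g z z"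
      using g_bil by (simp add: bilinear_ladd bilinear_radd bilinear_lmul bilinear_rmul algebra_simps)
    thus ?thesis using zy g_sym[of y z] by simp
  qed
  have zsp: "z \<notin> span {y}"
  proof
    assume "z \<in> span {y}"
    then obtain k where "z = k *\<^sub>R y" by (auto simp: span_singleton)
    hence "g z y = k * g y y" using g_bil by (simp add: bilinear_lmul)
    hence "k = 0" using zy y by simp
    thus False using \<open>z = k *\<^sub>R y\<close> z g_bil by (simp add: bilinear_lzero)
  qed
  have ind: "independent {z, y}"
    using zsp y0 by (simp add: independent_insert)
  have d2: "dim (span {z, y}) = 2"
    using dim_span_eq_card_independent[OF ind] yz by simp
  have nd: "\<forall>w\<in>span {z,y}. w \<noteq> 0 \<longrightarrow> g w w < 0"
  proof (intro ballI impI)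
    fix w assume w: "w \<in> span {z,y}" "w \<noteq> 0"
    then obtain a b where ab: "w = a *\<^sub>R y + b *\<^sub>R z"
      by (auto simp: span_insert span_singleton) (metis add.commute diff_add_cancel)
    have "a \<noteq> 0 \<or> b \<noteq> 0" using w ab by auto
    hence "a*a * g y y + b*b * g z z < 0"
    proof -
      have "a*a \<ge> 0" "b*b \<ge> 0" by simp_all
      moreover have "a*a > 0 \<or> b*b > 0" using \<open>a \<noteq> 0 \<or> b \<noteq> 0\<close> by (auto simp: zero_less_mult_iff)
      ultimately show ?thesis using y z
        by (smt (verit) mult_nonneg_nonpos mult_pos_neg)
    qed
    thus "g w w < 0" using gl ab by simp
  qed
  have "enat 2 \<in> {enat (vector_space.dim scaleR W) | W.
      module.subspace scaleR W \<and> W \<subseteq> (UNIV :: (real^'n) set) \<and> (\<forall>w\<in>W. w \<noteq> 0 \<longrightarrow> g w w < 0)}"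
    using d2 nd subspace_span[of "{z,y}", unfolded subspace_raw_def] by (intro CollectI exI[of _ "span {z,y}"]) (auto simp: dim_raw_def)
  hence "enat 2 \<le> neg_index scaleR g UNIV" unfolding neg_index_def by (rule Sup_upper)
  thus False using g_index by (simp add: one_enat_def)
qed



lemma h1_deriv_ok: "V \<in> H1 \<Longrightarrow> is_h1_deriv V (h1_deriv V)"
proof -
  assume "V \<in> H1"
  then obtain V' where "is_h1_deriv V V'" unfolding H1_def by blast
  thus ?thesis unfolding h1_deriv_def by (rule someI[of "is_h1_deriv V"])
qed

lemma bil_lin_l: "bilinear g \<Longrightarrow> bounded_linear (\<lambda>x. g x (w::real^'n))" for g :: "real^'n \<Rightarrow> real^'n \<Rightarrow> real"
  by (simp add: bilinear_def linear_conv_bounded_linear)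

lemma bil_integrable:
  fixes g :: "real^'n \<Rightarrow> real^'n \<Rightarrow> real" and D :: "real \<Rightarrow> real^'n"
  assumes g_bil: "bilinear g" and Di: "D integrable_on {0..1}"
    and D2: "(\<lambda>u. (norm (D u))\<^sup>2) integrable_on {0..1}"
  shows "(\<lambda>u. g (D u - m) (D u - m)) integrable_on {0..1}"
proof -
  obtain B where B: "B > 0" "\<And>x y. norm (g x y) \<le> B * norm x * norm y"
    using bilinear_bounded_pos[OF g_bil] by blast
  have Dm: "(\<lambda>u. D u - m) integrable_on {0..1}" using Di by (intro integrable_diff) auto
  have meas: "(\<lambda>u. g (D u - m) (D u - m)) \<in> borel_measurable (lebesgue_on {0..1})"
    by (rule borel_measurable_bilinear[OF g_bil]) (use integrable_imp_measurable[OF Dm] in auto)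
  have bnd: "(\<lambda>u. B * (2 * (norm (D u))\<^sup>2 + 2 * (norm m)\<^sup>2)) integrable_on {0..1}"
    using D2 by (intro integrable_on_mult_right integrable_add) auto
  show ?thesis
  proof (rule measurable_bounded_by_integrable_imp_integrable[OF meas bnd])
    fix u
    have "norm (D u - m) \<le> norm (D u) + norm m" by (rule norm_triangle_ineq4)
    hence "(norm (D u - m))\<^sup>2 \<le> (norm (D u) + norm m)\<^sup>2" by (simp add: power_mono)
    also have "\<dots> \<le> 2 * (norm (D u))\<^sup>2 + 2 * (norm m)\<^sup>2"
    proof -
      have "0 \<le> (norm (D u) - norm m)\<^sup>2" by simp
      thus ?thesis by (simp add: power2_eq_square algebra_simps)
    qed
    finally have "(norm (D u - m))\<^sup>2 \<le> 2 * (norm (D u))\<^sup>2 + 2 * (norm m)\<^sup>2" .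
    moreover have "norm (g (D u - m) (D u - m)) \<le> B * (norm (D u - m))\<^sup>2"
      using B(2)[of "D u - m" "D u - m"] by (simp add: power2_eq_square mult.assoc)
    ultimately show "norm (g (D u - m) (D u - m)) \<le> B * (2 * (norm (D u))\<^sup>2 + 2 * (norm m)\<^sup>2)"
      using B(1) by (meson less_imp_le mult_left_mono order_trans)
  qed simp
qed

lemma C0_ge:
  fixes g :: "real^'n \<Rightarrow> real^'n \<Rightarrow> real"
  assumes g_bil: "bilinear g" and g_sym: "\<And>x y. g x y = g y x"
    and g_index: "neg_index scaleR g UNIV = 1"
    and y: "g y0 y0 < 0" and V: "V \<in> hatK0 g P y0"
  shows "g (V 0) (V 0) \<le> C0 g V V"
proof -
  define D where "D = h1_deriv V"
  have VH: "V \<in> H1" "V 1 = 0" using V by (auto simp: hatK0_def H1_P_def)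
  have hD: "is_h1_deriv V D" unfolding D_def by (rule h1_deriv_ok[OF VH(1)])
  have Di: "D integrable_on {0..1}" and D2: "(\<lambda>u. (norm (D u))\<^sup>2) integrable_on {0..1}"
    and Vt: "\<And>t. t \<in> {0..1} \<Longrightarrow> V t = V 0 + integral {0..t} D"
    using hD unfolding is_h1_deriv_def by blast+
  define m where "m = integral {0..1} D"
  have m: "m = - V 0" using Vt[of 1] VH(2) by (simp add: m_def eq_neg_iff_add_eq_0 add.commute)
  obtain c where "AE u in lebesgue. u \<in> {0..1} \<longrightarrow> g (D u) y0 = c"
    using V by (auto simp: hatK0_def D_def)
  then obtain N where N: "negligible N" and Nc: "\<And>u. u \<in> {0..1} - N \<Longrightarrow> g (D u) y0 = c"
    unfolding eventually_ae_filter_negligible by blast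
  have lin: "\<And>w. bounded_linear (\<lambda>x. g x w)" using bil_lin_l[OF g_bil] .
  have ilin: "\<And>w. integral {0..1} (\<lambda>u. g (D u) w) = g m w"
    using integral_linear[OF Di lin] by (simp add: m_def o_def)
  have ilini: "\<And>w. (\<lambda>u. g (D u) w) integrable_on {0..1}"
    using integrable_linear[OF Di lin] by (simp add: o_def)
  have "integral {0..1} (\<lambda>u. g (D u) y0) = integral {0..1} (\<lambda>u::real. c)"
    by (rule integral_spike[OF N, where T="{0..1}" and f="\<lambda>u. g (D u) y0" and g="\<lambda>u. c"]) (metis Nc)
  hence gm: "g m y0 = c" using ilin by simp
  define E where "E = (\<lambda>u. g (D u - m) (D u - m))"
  have Ei: "E integrable_on {0..1}" unfolding E_def by (rule bil_integrable[OF g_bil Di D2])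
  have Enn: "E u \<ge> 0" if "u \<in> {0..1} - N" for u
  proof -
    have "g (D u - m) y0 = 0" using Nc[OF that] gm g_bil by (simp add: bilinear_lsub)
    thus ?thesis unfolding E_def by (rule spacelike[OF g_bil g_sym g_index y])
  qed
  define E' where "E' = (\<lambda>u. if u \<in> N then 0 else E u)"
  have "integral {0..1} E' = integral {0..1} E"
    by (rule integral_spike[OF N]) (auto simp: E'_def)
  moreover have "0 \<le> integral {0..1} E'"
  proof (rule integral_nonneg)
    show "E' integrable_on {0..1}" by (rule integrable_spike[OF Ei N]) (auto simp: E'_def)
  qed (use Enn in \<open>auto simp: E'_def\<close>)
  ultimately have E0: "integral {0..1} E \<ge> 0" by simp
  have exp: "g (D u) (D u) = E u + 2 * g (D u) m - g m m" for u
    unfolding E_def using g_bil g_sym[of m "D u"]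
    by (simp add: bilinear_lsub bilinear_rsub algebra_simps)
  have "C0 g V V = integral {0..1} (\<lambda>u. E u + 2 * g (D u) m - g m m)"
    unfolding C0_def D_def[symmetric] exp ..
  also have "\<dots> = integral {0..1} E + 2 * g m m - g m m"
  proof -
    have i2: "(\<lambda>u. 2 * g (D u) m) integrable_on {0..1}"
      using ilini[of m] by (rule integrable_on_mult_right)
    have i3: "(\<lambda>u. E u + 2 * g (D u) m) integrable_on {0..1}"
      using Ei i2 by (rule integrable_add)
    have "integral {0..1} (\<lambda>u. E u + 2 * g (D u) m - g m m)
        = integral {0..1} (\<lambda>u. E u + 2 * g (D u) m) - integral {0..1} (\<lambda>u::real. g m m)"
      by (rule integral_diff[OF i3]) auto
    also have "integral {0..1} (\<lambda>u. E u + 2 * g (D u) m) = integral {0..1} E + integral {0..1} (\<lambda>u. 2 * g (D u) m)"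
      by (rule integral_add[OF Ei i2])
    also have "integral {0..1} (\<lambda>u. 2 * g (D u) m) = 2 * g m m"
      using ilin[of m] by (simp add: integral_mult_right)
    finally show ?thesis by simp
  qed
  finally have "C0 g V V = integral {0..1} E + g m m" by simp
  moreover have "g m m = g (V 0) (V 0)" using m g_bil by (simp add: bilinear_lneg bilinear_rneg)
  ultimately show ?thesis using E0 by simp
qed



definition Lc :: "real^'n \<Rightarrow> real \<Rightarrow> real^'n" where
  "Lc x = (\<lambda>t. if t \<in> {0..1} then (1 - t) *\<^sub>R x else 0)"

lemma Lc_is_h1: "is_h1_deriv (Lc x) (\<lambda>u. - x)"
  unfolding is_h1_deriv_def
proof (intro conjI ballI)
  fix t :: real assume t: "t \<in> {0..1}"
  have "integral {0..t} (\<lambda>u. - x) = t *\<^sub>R (- x)" using t by simp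
  thus "Lc x t = Lc x 0 + integral {0..t} (\<lambda>u. - x)"
    using t by (simp add: Lc_def algebra_simps)
qed auto

lemma Lc_H1: "Lc x \<in> H1"
  using Lc_is_h1 unfolding H1_def by (auto simp: Lc_def)

lemma Lc_H1P: "x \<in> P \<Longrightarrow> Lc x \<in> H1_P P"
  using Lc_H1 unfolding H1_P_def by (auto simp: Lc_def)

lemma Lc_deriv_ae: "\<exists>N. negligible N \<and> (\<forall>u\<in>{0..1} - N. h1_deriv (Lc x) u = - x)"
proof -
  define D where "D = h1_deriv (Lc x)"
  have hD: "is_h1_deriv (Lc x) D" unfolding D_def by (rule h1_deriv_ok[OF Lc_H1])
  have Di: "D integrable_on {0..1}" and Vt: "\<And>t. t \<in> {0..1} \<Longrightarrow> Lc x t = Lc x 0 + integral {0..t} D"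
    using hD unfolding is_h1_deriv_def by blast+
  have fi: "(\<lambda>u. D u + x) integrable_on {0..1}" using Di by (intro integrable_add) auto
  have "integral {0..t} (\<lambda>u. D u + x) = 0" if t: "t \<in> {0..1}" for t
  proof -
    have Dt: "D integrable_on {0..t}" using integrable_on_subinterval[OF Di] t by auto
    have "integral {0..t} (\<lambda>u. D u + x) = integral {0..t} D + integral {0..t} (\<lambda>u. x)"
      by (rule integral_add[OF Dt]) auto
    also have "\<dots> = (Lc x t - Lc x 0) + t *\<^sub>R x" using Vt[OF t] t by simp
    also have "\<dots> = 0" using t by (simp add: Lc_def algebra_simps)
    finally show ?thesis .
  qed
  then obtain N where N: "negligible N" "\<forall>u\<in>{0..1} - N. D u + x = 0"
    using zero_deriv_ae[OF fi] by blast
  have "\<forall>u\<in>{0..1} - N. D u = - x"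
  proof
    fix u assume "u \<in> {0..1} - N"
    hence "D u + x = 0" using N by blast
    thus "D u = - x" by (simp add: eq_neg_iff_add_eq_0)
  qed
  thus ?thesis using N(1) unfolding D_def by blast
qed

lemma Lc_hatK0:
  assumes g_bil: "bilinear g" and x: "x \<in> P"
  shows "Lc x \<in> hatK0 g P y0"
proof -
  obtain N where N: "negligible N" "\<forall>u\<in>{0..1} - N. h1_deriv (Lc x) u = - x"
    using Lc_deriv_ae by blast
  have "AE u in lebesgue. u \<in> {0..1} \<longrightarrow> g (h1_deriv (Lc x) u) y0 = g (- x) y0"
    unfolding eventually_ae_filter_negligible
  proof (intro exI[of _ N] conjI subsetI)
    fix u assume "u \<in> {u. \<not> (u \<in> {0..1} \<longrightarrow> g (h1_deriv (Lc x) u) y0 = g (- x) y0)}"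
    hence "u \<in> {0..1}" "g (h1_deriv (Lc x) u) y0 \<noteq> g (- x) y0" by auto
    thus "u \<in> N" using N(2) by force
  qed (use N in simp)
  thus ?thesis unfolding hatK0_def using Lc_H1P[OF x] by blast
qed

lemma Lc_C0: "C0 g (Lc x) (Lc x) = g (- x) (- x)"
proof -
  obtain N where N: "negligible N" "\<forall>u\<in>{0..1} - N. h1_deriv (Lc x) u = - x"
    using Lc_deriv_ae by blast
  have "C0 g (Lc x) (Lc x) = integral {0..1} (\<lambda>u::real. g (- x) (- x))"
    unfolding C0_def
    by (rule integral_spike[OF N(1), where T="{0..1}" and g="\<lambda>u::real. g (- x) (- x)"]) (use N in auto)
  thus ?thesis by simp
qed

lemma Lc_linear: "Vector_Spaces.linear scaleR fscale Lc"
  unfolding Vector_Spaces.linear_iff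
proof (intro conjI allI ext)
  fix x y :: "real^'n" and t :: real
  show "Lc (x + y) t = (Lc x + Lc y) t" unfolding plus_fun_apply Lc_def by (simp add: scaleR_add_right)
next
  fix c :: real and x :: "real^'n" and t :: real
  show "Lc (c *\<^sub>R x) t = fscale c (Lc x) t" by (simp add: Lc_def fscale_def)
qed (simp_all add: vs_fscale real_vector.vector_space_axioms)

lemma Lc_inj: "inj Lc"
proof (rule injI)
  fix x y :: "real^'n" assume "Lc x = Lc y"
  hence "Lc x 0 = Lc y 0" by simp
  thus "x = y" by (simp add: Lc_def)
qed

lemma ev0_linear: "Vector_Spaces.linear fscale scaleR (\<lambda>V::real \<Rightarrow> real^'n. V 0)"
  unfolding Vector_Spaces.linear_iff
proof (intro conjI allI)
qed (simp_all add: vs_fscale real_vector.vector_space_axioms fscale_def)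



theorem proposition4p10:
  fixes g :: "real^'n \<Rightarrow> real^'n \<Rightarrow> real"
    and R :: "real \<Rightarrow> real^'n^'n"
    and P :: "(real^'n) set"
    and Y Y' :: "real \<Rightarrow> real^'n"
  assumes g_bil: "bilinear g"
    and g_sym: "\<And>x y. g x y = g y x"
    and g_nondeg: "\<And>x. (\<forall>y. g x y = 0) \<Longrightarrow> x = 0"
    and g_index: "neg_index scaleR g UNIV = 1"
    and R_cont: "continuous_on {0..1} R"
    and R_sym: "\<And>t x y. t \<in> {0..1} \<Longrightarrow> g (R t *v x) y = g x (R t *v y)"
    and P_sub: "subspace P"
    and P_nondeg: "\<And>x. x \<in> P \<Longrightarrow> (\<forall>y\<in>P. g x y = 0) \<Longrightarrow> x = 0"
    and Y_deriv: "\<And>t. t \<in> {0..1} \<Longrightarrow> (Y has_vector_derivative Y' t) (at t within {0..1})"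
    and Y'_deriv: "\<And>t. t \<in> {0..1} \<Longrightarrow> (Y' has_vector_derivative (R t *v Y t)) (at t within {0..1})"
    and Y_timelike: "\<And>t. t \<in> {0..1} \<Longrightarrow> g (Y t) (Y t) < 0"
  shows "neg_index fscale (C0 g) (hatK0 g P (Y 0)) = neg_index scaleR g P"
proof -
  define y0 where "y0 = Y 0"
  have y0: "g y0 y0 < 0" unfolding y0_def using Y_timelike[of 0] by simp
  have mh_ev: "module_hom fscale scaleR (\<lambda>V::real \<Rightarrow> real^'n. V 0)"
    by (rule module_hom_iff_linear[THEN iffD2, OF ev0_linear])
  have mh_Lc: "module_hom scaleR fscale (Lc :: real^'n \<Rightarrow> _)"
    by (rule module_hom_iff_linear[THEN iffD2, OF Lc_linear])
  have g00: "g 0 0 = 0" using g_bil by (simp add: bilinear_lzero)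
  let ?SL = "{enat (vector_space.dim fscale W) | W. module.subspace fscale W \<and> W \<subseteq> hatK0 g P y0
      \<and> (\<forall>w\<in>W. w \<noteq> 0 \<longrightarrow> C0 g w w < 0)}"
  let ?SR = "{enat (vector_space.dim scaleR W) | W. module.subspace scaleR W \<and> W \<subseteq> P
      \<and> (\<forall>w\<in>W. w \<noteq> 0 \<longrightarrow> g w w < 0)}"
  have "?SL \<subseteq> ?SR"
  proof (intro subsetI, elim CollectE exE conjE)
    fix k W assume k: "k = enat (vector_space.dim fscale W)" and W: "module.subspace fscale W"
      "W \<subseteq> hatK0 g P y0" "\<forall>w\<in>W. w \<noteq> 0 \<longrightarrow> C0 g w w < 0"
    define N where "N = (\<lambda>V::real \<Rightarrow> real^'n. V 0) ` W"
    have Nsub: "module.subspace scaleR N" unfolding N_def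
      by (rule module_hom.subspace_image[OF mh_ev W(1)])
    have ge: "g (V 0) (V 0) \<le> C0 g V V" if "V \<in> W" for V
      using C0_ge[OF g_bil g_sym g_index y0] W(2) that by blast
    have inj: "inj_on (\<lambda>V::real \<Rightarrow> real^'n. V 0) W"
    proof (rule inj_onI)
      fix V1 V2 assume V: "V1 \<in> W" "V2 \<in> W" "V1 0 = V2 0"
      have d: "V1 - V2 \<in> W" using module.subspace_diff[OF _ W(1) V(1) V(2)] vs_fscale
        by (simp add: module_iff_vector_space)
      have d0: "(V1 - V2) 0 = 0" using V(3) by simp
      show "V1 = V2"
      proof (rule ccontr)
        assume "V1 \<noteq> V2"
        hence "C0 g (V1 - V2) (V1 - V2) < 0" using W(3) d by simp
        moreover have "g ((V1 - V2) 0) ((V1 - V2) 0) \<le> C0 g (V1 - V2) (V1 - V2)" using ge[OF d] .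
        ultimately show False using d0 g00 by simp
      qed
    qed
    have Nneg: "\<forall>x\<in>N. x \<noteq> 0 \<longrightarrow> g x x < 0"
    proof (intro ballI impI)
      fix x assume "x \<in> N" "x \<noteq> 0"
      then obtain V where V: "V \<in> W" "x = V 0" unfolding N_def by blast
      hence "V \<noteq> 0" using \<open>x \<noteq> 0\<close> by auto
      hence "C0 g V V < 0" using W(3) V by blast
      thus "g x x < 0" using ge[OF V(1)] V by simp
    qed
    have NP: "N \<subseteq> P" unfolding N_def using W(2) by (auto simp: hatK0_def H1_P_def)
    have "vector_space.dim scaleR N = vector_space.dim fscale W"
      unfolding N_def by (rule dim_inj_image[OF ev0_linear W(1) inj])
    thus "k \<in> ?SR" using k Nsub NP Nneg by (intro CollectI exI[of _ N]) simp
  qed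
  moreover have "?SR \<subseteq> ?SL"
  proof (intro subsetI, elim CollectE exE conjE)
    fix k N assume k: "k = enat (vector_space.dim scaleR N)" and N: "module.subspace scaleR N"
      "N \<subseteq> P" "\<forall>w\<in>N. w \<noteq> 0 \<longrightarrow> g w w < 0"
    define W where "W = Lc ` N"
    have Wsub: "module.subspace fscale W" unfolding W_def
      by (rule module_hom.subspace_image[OF mh_Lc N(1)])
    have WK: "W \<subseteq> hatK0 g P y0" unfolding W_def using Lc_hatK0[OF g_bil] N(2) by blast
    have Wneg: "\<forall>w\<in>W. w \<noteq> 0 \<longrightarrow> C0 g w w < 0"
    proof (intro ballI impI)
      fix w assume "w \<in> W" "w \<noteq> 0"
      then obtain x where x: "x \<in> N" "w = Lc x" unfolding W_def by blast
      have "x \<noteq> 0"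
      proof
        assume "x = 0"
        hence "w = 0" using x by (simp add: Lc_def fun_eq_iff)
        thus False using \<open>w \<noteq> 0\<close> by simp
      qed
      hence "g x x < 0" using N(3) x by blast
      moreover have "g (- x) (- x) = g x x" using g_bil by (simp add: bilinear_lneg bilinear_rneg)
      ultimately show "C0 g w w < 0" using x Lc_C0[of g x] by simp
    qed
    have "vector_space.dim fscale W = vector_space.dim scaleR N"
      unfolding W_def by (rule dim_inj_image[OF Lc_linear N(1)]) (rule inj_on_subset[OF Lc_inj], simp)
    thus "k \<in> ?SL" using k Wsub WK Wneg by (intro CollectI exI[of _ W]) simp
  qed
  ultimately have "?SL = ?SR" by blast
  thus ?thesis unfolding neg_index_def y0_def by simp
qed

end
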